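(* Let $\Phi=\{\varphi_i\}_{i\in\Lambda}$ be a similarity IFS in $\mathbb{R}^d$ with attractor $K$. The following are equivalent: (1) $K$ is not contained in an affine hyperplane; (2) there exists a section $\Pi\subset\Lambda^*$ such that the IFS $\{\varphi_i\}_{i\in\Pi}$ is diffuse; (3) $K$ is hyperplane diffuse.
   Context: A similarity IFS is a finite family of contracting similarities of $\mathbb{R}^d$; the attractor $K$ is the nonempty compact set with $K=\bigcup_i\varphi_iK$; for $i=i_1\dots i_n\in\Lambda^*$, $\varphi_i=\varphi_{i_1}\circ\cdots\circ\varphi_{i_n}$. A section is a finite set $\Pi\subset\Lambda^*$ such that the cylinders $[i]=\{j\in\Lambda^{\mathbb{N}}: i\text{ is a prefix of }j\}$, $i\in\Pi$, are pairwise disjoint with union $\Lambda^{\mathbb{N}}$. An IFS $\{\varphi_i\}_{i\in A}$ is diffuse if there is $c>0$ such that for every affine hyperplane $\mathcal{L}$ some $i\in A$ has $\varphi_iK\cap\mathcal{L}^{(c)}=\emptyset$ ($\mathcal{L}^{(c)}$ the open $c$-neighborhood). A closed set $E$ is hyperplane diffuse if there are $\beta,\xi_0>0$ such that for all $\xi\in(0,\xi_0)$, $x\in E$ and affine hyperplanes $\mathcal{L}$, $E\cap B_\xi(x)\setminus\mathcal{L}^{(\beta\xi)}\neq\emptyset$. *)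

theory Defs
  imports "HOL-Analysis.Analysis"
begin

definition contracting_similarity :: "('a::euclidean_space \<Rightarrow> 'a) \<Rightarrow> bool" where
  "contracting_similarity f \<longleftrightarrow>
     (\<exists>r. 0 < r \<and> r < 1 \<and> (\<forall>x y. dist (f x) (f y) = r * dist x y))"

definition similarity_IFS :: "'i set \<Rightarrow> ('i \<Rightarrow> 'a::euclidean_space \<Rightarrow> 'a) \<Rightarrow> bool" where
  "similarity_IFS Lam phi \<longleftrightarrow> finite Lam \<and> Lam \<noteq> {} \<and> (\<forall>i\<in>Lam. contracting_similarity (phi i))"

definition is_attractor :: "'i set \<Rightarrow> ('i \<Rightarrow> 'a::euclidean_space \<Rightarrow> 'a) \<Rightarrow> 'a set \<Rightarrow> bool" where
  "is_attractor Lam phi K \<longleftrightarrow> K \<noteq> {} \<and> compact K \<and> K = (\<Union>i\<in>Lam. phi i ` K)"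

definition word_map :: "('i \<Rightarrow> 'a \<Rightarrow> 'a) \<Rightarrow> 'i list \<Rightarrow> 'a \<Rightarrow> 'a" where
  "word_map phi w = foldr (\<lambda>j f. phi j \<circ> f) w id"

definition infwords :: "'i set \<Rightarrow> (nat \<Rightarrow> 'i) set" where
  "infwords Lam = {\<omega>. \<forall>n. \<omega> n \<in> Lam}"

definition cylinder :: "'i set \<Rightarrow> 'i list \<Rightarrow> (nat \<Rightarrow> 'i) set" where
  "cylinder Lam w = {\<omega> \<in> infwords Lam. \<forall>k<length w. \<omega> k = w ! k}"

definition is_section :: "'i set \<Rightarrow> 'i list set \<Rightarrow> bool" where
  "is_section Lam Sec \<longleftrightarrow> finite Sec \<and> Sec \<subseteq> lists Lam \<and>
     (\<forall>v\<in>Sec. \<forall>w\<in>Sec. v \<noteq> w \<longrightarrow> cylinder Lam v \<inter> cylinder Lam w = {}) \<and>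
     (\<Union>w\<in>Sec. cylinder Lam w) = infwords Lam"

definition affine_hyperplane :: "'a::euclidean_space set \<Rightarrow> bool" where
  "affine_hyperplane L \<longleftrightarrow> (\<exists>a b. a \<noteq> 0 \<and> L = {x. a \<bullet> x = b})"

definition open_nbhd :: "'a::metric_space set \<Rightarrow> real \<Rightarrow> 'a set" where
  "open_nbhd L c = {x. \<exists>y\<in>L. dist x y < c}"

definition diffuse_IFS :: "('i \<Rightarrow> 'a::euclidean_space \<Rightarrow> 'a) \<Rightarrow> 'i list set \<Rightarrow> 'a set \<Rightarrow> bool" where
  "diffuse_IFS phi A K \<longleftrightarrow>
     (\<exists>c>0. \<forall>L. affine_hyperplane L \<longrightarrow> (\<exists>w\<in>A. word_map phi w ` K \<inter> open_nbhd L c = {}))"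

definition hyperplane_diffuse :: "'a::euclidean_space set \<Rightarrow> bool" where
  "hyperplane_diffuse E \<longleftrightarrow> closed E \<and>
     (\<exists>\<beta>>0. \<exists>\<xi>0>0. \<forall>\<xi>. 0 < \<xi> \<and> \<xi> < \<xi>0 \<longrightarrow> (\<forall>x\<in>E. \<forall>L. affine_hyperplane L \<longrightarrow>
        E \<inter> ball x \<xi> - open_nbhd L (\<beta> * \<xi>) \<noteq> {}))"

end

theory Submission
  imports Defs
begin


lemma sim_affine:
  fixes f :: "'a::euclidean_space \<Rightarrow> 'a"
  assumes s: "s > 0" and d: "\<And>x y. dist (f x) (f y) = s * dist x y"
  shows "surj f" and "\<And>L. affine_hyperplane L \<Longrightarrow> affine_hyperplane (f -` L)"
proof -
  define g where "g x = (1/s) *\<^sub>R (f x - f 0)" for x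
  have gd: "dist (g x) (g y) = dist x y" for x y
  proof -
    have "dist (g x) (g y) = norm ((1/s) *\<^sub>R (f x - f y))"
      unfolding g_def dist_norm by (simp add: algebra_simps)
    also have "\<dots> = (1/s) * dist (f x) (f y)" using s by (simp add: dist_norm)
    also have "\<dots> = dist x y" using s d by simp
    finally show ?thesis .
  qed
  have "orthogonal_transformation g"
    unfolding orthogonal_transformation_isometry using gd by (simp add: g_def)
  then have lg: "linear g" and sg: "surj g"
    by (simp_all add: orthogonal_transformation_linear orthogonal_transformation_surj)
  define c0 where "c0 = f 0"
  have fg: "f x = s *\<^sub>R g x + c0" for x using s by (simp add: g_def c0_def)
  show "surj f"
  proof -
    have "z = f (inv g ((1/s) *\<^sub>R (z - c0)))" for z
      using s by (simp add: fg surj_f_inv_f[OF sg])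
    then show ?thesis by blast
  qed
  fix L :: "'a set" assume "affine_hyperplane L"
  then obtain a b where a: "a \<noteq> 0" and L: "L = {x. a \<bullet> x = b}"
    unfolding affine_hyperplane_def by blast
  define v where "v = adjoint g a"
  have vw: "y \<bullet> v = g y \<bullet> a" for y unfolding v_def by (rule adjoint_works[OF lg])
  have "v \<noteq> 0"
  proof
    assume "v = 0"
    obtain y where "g y = a" using sg by (metis surj_f_inv_f)
    then have "a \<bullet> a = 0" using vw[of y] \<open>v = 0\<close> by simp
    then show False using a by simp
  qed
  moreover have "f -` L = {y. v \<bullet> y = (b - a \<bullet> c0) / s}"
    using s by (auto simp: L fg inner_add_right vw inner_commute field_simps)
  ultimately show "affine_hyperplane (f -` L)" unfolding affine_hyperplane_def by blast
qed

lemma sim_nbhd: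
  fixes f :: "'a::euclidean_space \<Rightarrow> 'a"
  assumes s: "s > 0" and d: "\<And>x y. dist (f x) (f y) = s * dist x y"
    and L: "affine_hyperplane L" and A: "A \<inter> open_nbhd (f -` L) c = {}"
  shows "f ` A \<inter> open_nbhd L (s * c) = {}"
proof (rule ccontr)
  assume "f ` A \<inter> open_nbhd L (s * c) \<noteq> {}"
  then obtain y z where y: "y \<in> A" and z: "z \<in> L" and dz: "dist (f y) z < s * c"
    unfolding open_nbhd_def by blast
  obtain y' where "z = f y'" using sim_affine(1)[OF s d] by (metis surj_f_inv_f)
  with z dz d have "y' \<in> f -` L" "s * dist y y' < s * c" by auto
  then have "y \<in> open_nbhd (f -` L) c" using s unfolding open_nbhd_def by auto
  with y A show False by blast
qed



lemma word_map_Nil[simp]: "word_map phi [] = id"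
  by (simp add: word_map_def)
lemma word_map_Cons[simp]: "word_map phi (i # w) = phi i \<circ> word_map phi w"
  by (simp add: word_map_def)

locale ifs =
  fixes Lam :: "'i set" and phi :: "'i \<Rightarrow> 'a::euclidean_space \<Rightarrow> 'a" and K :: "'a set"
  assumes S: "similarity_IFS Lam phi" and At: "is_attractor Lam phi K"
begin

definition rr :: "'i \<Rightarrow> real" where
  "rr i = (SOME r. 0 < r \<and> r < 1 \<and> (\<forall>x y. dist (phi i x) (phi i y) = r * dist x y))"

lemma rr: assumes "i \<in> Lam"
  shows "0 < rr i" "rr i < 1" "dist (phi i x) (phi i y) = rr i * dist x y"
proof -
  have "\<exists>r. 0 < r \<and> r < 1 \<and> (\<forall>x y. dist (phi i x) (phi i y) = r * dist x y)"
    using S assms unfolding similarity_IFS_def contracting_similarity_def by blast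
  from someI_ex[OF this] show "0 < rr i" "rr i < 1" "dist (phi i x) (phi i y) = rr i * dist x y"
    unfolding rr_def by blast+
qed

lemma finLam: "finite Lam" and neLam: "Lam \<noteq> {}"
  using S unfolding similarity_IFS_def by auto

definition rmin where "rmin = Min (rr ` Lam)"
definition rmax where "rmax = Max (rr ` Lam)"

lemma rmin: "0 < rmin" "\<And>i. i \<in> Lam \<Longrightarrow> rmin \<le> rr i"
  using finLam neLam rr(1) by (auto simp: rmin_def)
lemma rmax: "rmax < 1" "\<And>i. i \<in> Lam \<Longrightarrow> rr i \<le> rmax" "0 < rmax"
proof -
  show "rmax < 1" using finLam neLam rr(2) by (auto simp: rmax_def)
  show "\<And>i. i \<in> Lam \<Longrightarrow> rr i \<le> rmax" using finLam by (auto simp: rmax_def)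
  obtain i where "i \<in> Lam" using neLam by blast
  then have "rr i \<le> rmax" "0 < rr i" using rr(1) finLam by (auto simp: rmax_def)
  then show "0 < rmax" by linarith
qed

definition ratio :: "'i list \<Rightarrow> real" where "ratio w = prod_list (map rr w)"

lemma ratio_simps[simp]: "ratio [] = 1" "ratio (i # w) = rr i * ratio w"
  by (simp_all add: ratio_def)

lemma ratio_dist: "w \<in> lists Lam \<Longrightarrow> dist (word_map phi w x) (word_map phi w y) = ratio w * dist x y"
  by (induction w arbitrary: x y) (auto simp: rr(3))

lemma ratio_pos: "w \<in> lists Lam \<Longrightarrow> 0 < ratio w"
  by (induction w) (auto simp: rr(1))

lemma ratio_le: "w \<in> lists Lam \<Longrightarrow> ratio w \<le> rmax ^ length w"
proof (induction w)
  case (Cons i w)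
  then have "rr i * ratio w \<le> rmax * rmax ^ length w"
    by (intro mult_mono) (auto simp: rmax(2) less_imp_le[OF ratio_pos] less_imp_le[OF rmax(3)])
  then show ?case by simp
qed simp

lemma Kne: "K \<noteq> {}" and Kc: "compact K" and Keq: "K = (\<Union>i\<in>Lam. phi i ` K)"
  using At unfolding is_attractor_def by auto

lemma word_K: "w \<in> lists Lam \<Longrightarrow> word_map phi w ` K \<subseteq> K"
proof (induction w)
  case (Cons i w)
  then have "phi i ` (word_map phi w ` K) \<subseteq> phi i ` K" by auto
  also have "\<dots> \<subseteq> K" using Cons.prems Keq by auto
  finally show ?case by (simp add: image_comp)
qed simp

lemma decomp_len: "x \<in> K \<Longrightarrow> \<exists>w z. w \<in> lists Lam \<and> length w = n \<and> z \<in> K \<and> x = word_map phi w z"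
proof (induction n arbitrary: x)
  case 0 then show ?case by (intro exI[of _ "[]"] exI[of _ x]) simp
next
  case (Suc n)
  then obtain i y where i: "i \<in> Lam" "y \<in> K" "x = phi i y" using Keq by blast
  from Suc.IH[OF i(2)] obtain w z where "w \<in> lists Lam" "length w = n" "z \<in> K" "y = word_map phi w z"
    by blast
  with i show ?case by (intro exI[of _ "i # w"] exI[of _ z]) simp
qed

lemma decomp_t_aux: "rmax ^ n < t \<Longrightarrow> t \<le> 1 \<Longrightarrow> x \<in> K \<Longrightarrow>
  \<exists>u z. u \<in> lists Lam \<and> z \<in> K \<and> x = word_map phi u z \<and> rmin * t \<le> ratio u \<and> ratio u \<le> t"
proof (induction n arbitrary: t x)
  case 0 then show ?case by simp
next
  case (Suc n)
  then obtain i y where i: "i \<in> Lam" "y \<in> K" "x = phi i y" using Keq by blast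
  show ?case
  proof (cases "rr i \<le> t")
    case True
    have "rmin * t \<le> rmin * 1" using Suc.prems rmin(1) by (intro mult_left_mono) auto
    also have "\<dots> \<le> rr i" using rmin(2)[OF i(1)] by simp
    finally have "rmin * t \<le> ratio [i]" by simp
    with True i show ?thesis by (intro exI[of _ "[i]"] exI[of _ y]) auto
  next
    case False
    have ri: "0 < rr i" "rr i \<le> rmax" using rr(1) rmax(2) i(1) by auto
    define t' where "t' = t / rr i"
    have "rmax ^ n * rr i \<le> rmax ^ n * rmax" using ri by (intro mult_left_mono) auto
    also have "\<dots> < t" using Suc.prems(1) by (simp add: mult.commute)
    finally have "rmax ^ n < t'" using ri by (simp add: t'_def field_simps)
    moreover have "t' \<le> 1" using False ri by (simp add: t'_def)
    ultimately obtain u z where u: "u \<in> lists Lam" "z \<in> K" "y = word_map phi u z"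
       "rmin * t' \<le> ratio u" "ratio u \<le> t'"
      using Suc.IH i(2) by blast
    have "rmin * t \<le> rr i * ratio u" using u(4) ri by (simp add: t'_def field_simps)
    moreover have "rr i * ratio u \<le> t" using u(5) ri by (simp add: t'_def field_simps)
    ultimately show ?thesis using u i by (intro exI[of _ "i # u"] exI[of _ z]) auto
  qed
qed

lemma decomp_t: "0 < t \<Longrightarrow> t \<le> 1 \<Longrightarrow> x \<in> K \<Longrightarrow>
  \<exists>u z. u \<in> lists Lam \<and> z \<in> K \<and> x = word_map phi u z \<and> rmin * t \<le> ratio u \<and> ratio u \<le> t"
  using real_arch_pow_inv[of t rmax] rmax(1) decomp_t_aux by blast

end


lemma uniform_off:
  fixes K :: "'a::euclidean_space set"
  assumes Kc: "compact K" and Kne: "K \<noteq> {}" and nh: "\<not> (\<exists>L. affine_hyperplane L \<and> K \<subseteq> L)"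
  shows "\<exists>\<delta>>0. \<forall>a b. norm a = 1 \<longrightarrow> (\<exists>x\<in>K. \<delta> \<le> \<bar>a \<bullet> x - b\<bar>)"
proof (rule ccontr)
  assume "\<not> ?thesis"
  then have H: "\<And>\<delta>. \<delta> > 0 \<Longrightarrow> \<exists>a b. norm a = 1 \<and> (\<forall>x\<in>K. \<bar>a \<bullet> x - b\<bar> < \<delta>)"
    by (auto simp: not_le)
  obtain M where M: "\<And>x. x \<in> K \<Longrightarrow> norm x \<le> M"
    using compact_imp_bounded[OF Kc] unfolding bounded_iff by blast
  obtain x0 where x0: "x0 \<in> K" using Kne by blast
  have "\<forall>n. \<exists>p. norm (fst p) = 1 \<and> (\<forall>x\<in>K. \<bar>fst p \<bullet> x - snd p\<bar> < inverse (real (Suc n)))"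
  proof
    fix n
    from H[of "inverse (real (Suc n))"] obtain a b where
      "norm a = 1 \<and> (\<forall>x\<in>K. \<bar>a \<bullet> x - b\<bar> < inverse (real (Suc n)))" by auto
    then show "\<exists>p. norm (fst p) = 1 \<and> (\<forall>x\<in>K. \<bar>fst p \<bullet> x - snd p\<bar> < inverse (real (Suc n)))"
      by (intro exI[of _ "(a, b)"]) simp
  qed
  then obtain P where P: "\<And>n. norm (fst (P n)) = 1"
      "\<And>n x. x \<in> K \<Longrightarrow> \<bar>fst (P n) \<bullet> x - snd (P n)\<bar> < inverse (real (Suc n))"
    by metis
  define S where "S = sphere (0::'a) 1 \<times> cball (0::real) (M + 1)"
  have "compact S" unfolding S_def by (intro compact_Times compact_sphere compact_cball)
  have PS: "P n \<in> S" for n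
  proof -
    have "\<bar>fst (P n) \<bullet> x0\<bar> \<le> norm (fst (P n)) * norm x0" by (rule Cauchy_Schwarz_ineq2)
    also have "\<dots> \<le> M" using P(1) M[OF x0] by simp
    finally have "\<bar>fst (P n) \<bullet> x0\<bar> \<le> M" .
    moreover have "\<bar>fst (P n) \<bullet> x0 - snd (P n)\<bar> < 1"
      using P(2)[OF x0, of n] by (smt (verit) inverse_le_1_iff of_nat_0_le_iff of_nat_Suc)
    ultimately have "\<bar>snd (P n)\<bar> \<le> M + 1" by linarith
    then show ?thesis using P(1)[of n] unfolding S_def by (cases "P n") auto
  qed
  have "\<forall>n. P n \<in> S" using PS by blast
  then obtain l r where l: "l \<in> S" and r: "strict_mono r" and lim: "(P \<circ> r) \<longlonglongrightarrow> l"
    by (rule seq_compactE[OF compact_imp_seq_compact[OF \<open>compact S\<close>]])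
  obtain a b where ab: "l = (a, b)" by (cases l)
  have na: "norm a = 1" using l ab unfolding S_def by simp
  have "a \<bullet> x = b" if x: "x \<in> K" for x
  proof -
    have l1: "(\<lambda>n. \<bar>fst ((P \<circ> r) n) \<bullet> x - snd ((P \<circ> r) n)\<bar>) \<longlonglongrightarrow> \<bar>fst l \<bullet> x - snd l\<bar>"
    proof -
      have lf: "(\<lambda>n. fst ((P \<circ> r) n)) \<longlonglongrightarrow> fst l" by (rule tendsto_fst[OF lim])
      have ls: "(\<lambda>n. snd ((P \<circ> r) n)) \<longlonglongrightarrow> snd l" by (rule tendsto_snd[OF lim])
      show ?thesis by (intro tendsto_rabs tendsto_diff tendsto_inner lf ls tendsto_const)
    qed
    have l2: "(\<lambda>n. inverse (real (Suc n))) \<longlonglongrightarrow> 0" by (rule LIMSEQ_inverse_real_of_nat)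
    have "\<bar>fst ((P \<circ> r) n) \<bullet> x - snd ((P \<circ> r) n)\<bar> \<le> inverse (real (Suc n))" for n
    proof -
      have "\<bar>fst ((P \<circ> r) n) \<bullet> x - snd ((P \<circ> r) n)\<bar> \<le> inverse (real (Suc (r n)))"
        using P(2)[OF x, of "r n"] by simp
      also have "\<dots> \<le> inverse (real (Suc n))"
        using seq_suble[OF r, of n] by (simp add: le_imp_inverse_le)
      finally show ?thesis .
    qed
    then have "\<bar>fst l \<bullet> x - snd l\<bar> \<le> 0"
      using LIMSEQ_le[OF l1 l2] by blast
    then show ?thesis using ab by simp
  qed
  then have "K \<subseteq> {x. a \<bullet> x = b}" by blast
  moreover have "affine_hyperplane {x. a \<bullet> x = b}"
    unfolding affine_hyperplane_def using na by (intro exI[of _ a] exI[of _ b]) auto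
  ultimately show False using nh by blast
qed

lemma section_len:
  assumes "finite Lam"
  shows "is_section Lam {w \<in> lists Lam. length w = n}"
  unfolding is_section_def
proof (intro conjI)
  have "{w \<in> lists Lam. length w = n} = {xs. set xs \<subseteq> Lam \<and> length xs = n}" by auto
  then show "finite {w \<in> lists Lam. length w = n}" using finite_lists_length_eq[OF assms] by simp
  show "{w \<in> lists Lam. length w = n} \<subseteq> lists Lam" by blast
  show "\<forall>v\<in>{w \<in> lists Lam. length w = n}. \<forall>w\<in>{w \<in> lists Lam. length w = n}.
          v \<noteq> w \<longrightarrow> cylinder Lam v \<inter> cylinder Lam w = {}"
  proof (intro ballI impI)
    fix v w assume v: "v \<in> {w \<in> lists Lam. length w = n}" and w: "w \<in> {w \<in> lists Lam. length w = n}"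
      and vw: "v \<noteq> w"
    then obtain k where k: "k < n" "v ! k \<noteq> w ! k" using nth_equalityI[of v w] by auto
    then show "cylinder Lam v \<inter> cylinder Lam w = {}" using v w unfolding cylinder_def by auto
  qed
  show "(\<Union>w\<in>{w \<in> lists Lam. length w = n}. cylinder Lam w) = infwords Lam"
  proof
    show "(\<Union>w\<in>{w \<in> lists Lam. length w = n}. cylinder Lam w) \<subseteq> infwords Lam"
      unfolding cylinder_def by blast
    show "infwords Lam \<subseteq> (\<Union>w\<in>{w \<in> lists Lam. length w = n}. cylinder Lam w)"
    proof
      fix \<omega> assume o: "\<omega> \<in> infwords Lam"
      then have "map \<omega> [0..<n] \<in> {w \<in> lists Lam. length w = n}" by (auto simp: infwords_def)
      moreover have "\<omega> \<in> cylinder Lam (map \<omega> [0..<n])" using o by (auto simp: cylinder_def)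
      ultimately show "\<omega> \<in> (\<Union>w\<in>{w \<in> lists Lam. length w = n}. cylinder Lam w)" by blast
    qed
  qed
qed

context ifs begin

lemma boundK: "\<exists>D\<ge>1. \<forall>x\<in>K. \<forall>y\<in>K. dist x y < D"
proof -
  obtain M where M: "\<And>x. x \<in> K \<Longrightarrow> norm x \<le> M"
    using compact_imp_bounded[OF Kc] unfolding bounded_iff by blast
  obtain x0 where "x0 \<in> K" using Kne by blast
  then have "0 \<le> M" using M norm_ge_zero order_trans by blast
  have "dist x y < 2 * M + 1" if "x \<in> K" "y \<in> K" for x y
  proof -
    have "dist x y \<le> norm x + norm y" by (simp add: dist_norm norm_triangle_ineq4)
    then show ?thesis using M[OF that(1)] M[OF that(2)] by linarith
  qed
  then show ?thesis using \<open>0 \<le> M\<close> by (intro exI[of _ "2*M+1"]) auto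
qed

lemma one_two:
  assumes nh: "\<not> (\<exists>L. affine_hyperplane L \<and> K \<subseteq> L)"
  shows "\<exists>Sec. is_section Lam Sec \<and> diffuse_IFS phi Sec K"
proof -
  obtain \<delta> where d: "\<delta> > 0" and dH: "\<And>a b. norm a = 1 \<Longrightarrow> \<exists>x\<in>K. \<delta> \<le> \<bar>a \<bullet> x - b\<bar>"
    using uniform_off[OF Kc Kne nh] by blast
  obtain D where D: "D \<ge> 1" "\<And>x y. x \<in> K \<Longrightarrow> y \<in> K \<Longrightarrow> dist x y < D" using boundK by blast
  obtain n where n: "rmax ^ n < \<delta> / (2 * D)"
    using real_arch_pow_inv[of "\<delta> / (2 * D)" rmax] rmax(1) d D(1) by auto
  define Sec where "Sec = {w \<in> lists Lam. length w = n}"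
  have "diffuse_IFS phi Sec K"
    unfolding diffuse_IFS_def
  proof (intro exI[of _ "\<delta>/2"] conjI allI impI)
    show "\<delta>/2 > 0" using d by simp
    fix L :: "'a set" assume "affine_hyperplane L"
    then obtain a b where a: "a \<noteq> 0" and L: "L = {x. a \<bullet> x = b}"
      unfolding affine_hyperplane_def by blast
    define a' where "a' = a /\<^sub>R norm a"
    define b' where "b' = b / norm a"
    have na': "norm a' = 1" using a by (simp add: a'_def)
    have L': "y \<in> L \<Longrightarrow> a' \<bullet> y = b'" for y using a by (auto simp: L a'_def b'_def divide_inverse mult.commute)
    obtain x where x: "x \<in> K" "\<delta> \<le> \<bar>a' \<bullet> x - b'\<bar>" using dH[OF na'] by blast
    obtain w z where w: "w \<in> lists Lam" "length w = n" "z \<in> K" "x = word_map phi w z"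
      using decomp_len[OF x(1)] by blast
    have "word_map phi w ` K \<inter> open_nbhd L (\<delta>/2) = {}"
    proof (rule ccontr)
      assume "word_map phi w ` K \<inter> open_nbhd L (\<delta>/2) \<noteq> {}"
      then obtain v y' where v: "v \<in> K" "y' \<in> L" "dist (word_map phi w v) y' < \<delta>/2"
        unfolding open_nbhd_def by blast
      define y where "y = word_map phi w v"
      have "dist x y = ratio w * dist z v" using ratio_dist[OF w(1)] w(4) y_def by simp
      also have "\<dots> \<le> rmax ^ n * D"
        using ratio_le[OF w(1)] w(2) ratio_pos[OF w(1)] D(2)[OF w(3) v(1)]
        by (intro mult_mono) auto
      also have "\<dots> < \<delta> / 2" using n D(1) by (simp add: field_simps)
      finally have dxy: "dist x y < \<delta>/2" .
      have "\<bar>a' \<bullet> x - b'\<bar> = \<bar>a' \<bullet> (x - y) + a' \<bullet> (y - y')\<bar>"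
        using L'[OF v(2)] by (simp add: inner_diff_right)
      also have "\<dots> \<le> \<bar>a' \<bullet> (x - y)\<bar> + \<bar>a' \<bullet> (y - y')\<bar>" by (rule abs_triangle_ineq)
      also have "\<dots> \<le> norm (x - y) + norm (y - y')"
        using Cauchy_Schwarz_ineq2[of a' "x - y"] Cauchy_Schwarz_ineq2[of a' "y - y'"] na'
        by simp
      also have "\<dots> < \<delta>" using dxy v(3) y_def by (simp add: dist_norm)
      finally show False using x(2) by simp
    qed
    then show "\<exists>w\<in>Sec. word_map phi w ` K \<inter> open_nbhd L (\<delta>/2) = {}"
      using w unfolding Sec_def by blast
  qed
  then show ?thesis using section_len[OF finLam] unfolding Sec_def by blast
qed

lemma two_three:
  assumes sec: "is_section Lam Sec" and df: "diffuse_IFS phi Sec K"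
  shows "hyperplane_diffuse K"
proof -
  have SecL: "Sec \<subseteq> lists Lam" using sec by (simp add: is_section_def)
  obtain c where c: "c > 0" and cH: "\<And>L. affine_hyperplane L \<Longrightarrow>
      \<exists>w\<in>Sec. word_map phi w ` K \<inter> open_nbhd L c = {}"
    using df unfolding diffuse_IFS_def by blast
  obtain D where D: "D \<ge> 1" "\<And>x y. x \<in> K \<Longrightarrow> y \<in> K \<Longrightarrow> dist x y < D" using boundK by blast
  define \<beta> where "\<beta> = rmin * c / D"
  have b0: "\<beta> > 0" using rmin(1) c D(1) by (simp add: \<beta>_def)
  have main: "K \<inter> ball x \<xi> - open_nbhd L (\<beta> * \<xi>) \<noteq> {}"
    if xi: "0 < \<xi>" "\<xi> < 1" and x: "x \<in> K" and L: "affine_hyperplane L" for \<xi> x L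
  proof -
    define t where "t = \<xi> / D"
    have t: "0 < t" "t \<le> 1" using xi D(1) by (auto simp: t_def field_simps)
    obtain u z where u: "u \<in> lists Lam" "z \<in> K" "x = word_map phi u z"
        "rmin * t \<le> ratio u" "ratio u \<le> t"
      using decomp_t[OF t x] by blast
    define f where "f = word_map phi u"
    have s: "ratio u > 0" using ratio_pos[OF u(1)] .
    have fd: "\<And>x y. dist (f x) (f y) = ratio u * dist x y" using ratio_dist[OF u(1)] f_def by simp
    obtain w where w: "w \<in> Sec" "word_map phi w ` K \<inter> open_nbhd (f -` L) c = {}"
      using cH[OF sim_affine(2)[OF s fd L]] by blast
    have disj: "f ` (word_map phi w ` K) \<inter> open_nbhd L (ratio u * c) = {}"
      by (rule sim_nbhd[OF s fd L w(2)])
    obtain v where v: "v \<in> K" using Kne by blast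
    define y where "y = f (word_map phi w v)"
    have wv: "word_map phi w v \<in> K" using word_K SecL w(1) v by blast
    have yK: "y \<in> K" using word_K[OF u(1)] wv unfolding y_def f_def by blast
    have "dist x y = ratio u * dist z (word_map phi w v)" using fd u(3) f_def y_def by simp
    also have "\<dots> \<le> t * D" using u(5) s D(2)[OF u(2) wv] by (intro mult_mono) auto
    also have "\<dots> = \<xi>" using D(1) by (simp add: t_def)
    finally have "dist x y \<le> \<xi>" .
    have "dist x y < \<xi>"
    proof -
      have "dist x y = ratio u * dist z (word_map phi w v)" using fd u(3) f_def y_def by simp
      also have "\<dots> < t * D" using u(5) s D(2)[OF u(2) wv] t(1)
        by (smt (verit) mult_less_cancel_left_pos mult_right_mono zero_le_dist)
      also have "\<dots> = \<xi>" using D(1) by (simp add: t_def)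
      finally show ?thesis .
    qed
    moreover have "y \<notin> open_nbhd L (\<beta> * \<xi>)"
    proof
      assume "y \<in> open_nbhd L (\<beta> * \<xi>)"
      moreover have "\<beta> * \<xi> \<le> ratio u * c"
      proof -
        have "\<beta> * \<xi> = (rmin * t) * c" using D(1) by (simp add: \<beta>_def t_def field_simps)
        also have "\<dots> \<le> ratio u * c" using u(4) c by (intro mult_right_mono) auto
        finally show ?thesis .
      qed
      ultimately have "y \<in> open_nbhd L (ratio u * c)" unfolding open_nbhd_def by force
      moreover have "y \<in> f ` (word_map phi w ` K)" using v unfolding y_def by blast
      ultimately show False using disj by blast
    qed
    ultimately show ?thesis using yK by (auto simp: dist_commute)
  qed
  show ?thesis unfolding hyperplane_diffuse_def
    using compact_imp_closed[OF Kc] b0 main by (intro conjI exI[of _ \<beta>] exI[of _ 1]) auto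
qed

lemma three_one:
  assumes "hyperplane_diffuse K"
  shows "\<not> (\<exists>L. affine_hyperplane L \<and> K \<subseteq> L)"
proof
  assume "\<exists>L. affine_hyperplane L \<and> K \<subseteq> L"
  then obtain L where L: "affine_hyperplane L" "K \<subseteq> L" by blast
  obtain \<beta> \<xi>0 where b: "\<beta> > 0" "\<xi>0 > 0" and H: "\<And>\<xi> x L. 0 < \<xi> \<Longrightarrow> \<xi> < \<xi>0 \<Longrightarrow> x \<in> K \<Longrightarrow>
      affine_hyperplane L \<Longrightarrow> K \<inter> ball x \<xi> - open_nbhd L (\<beta> * \<xi>) \<noteq> {}"
    using assms unfolding hyperplane_diffuse_def by blast
  obtain x where x: "x \<in> K" using Kne by blast
  have "K \<inter> ball x (\<xi>0/2) - open_nbhd L (\<beta> * (\<xi>0/2)) \<noteq> {}"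
    by (rule H) (use x L(1) b in auto)
  then obtain y where "y \<in> K" "y \<notin> open_nbhd L (\<beta> * (\<xi>0/2))" by blast
  moreover have "y \<in> open_nbhd L (\<beta> * (\<xi>0/2))" using \<open>y \<in> K\<close> L(2) b
    unfolding open_nbhd_def by (intro CollectI bexI[of _ y]) auto
  ultimately show False by blast
qed

end

theorem theorem3p12:
  fixes Lam :: "'i set" and phi :: "'i \<Rightarrow> 'a::euclidean_space \<Rightarrow> 'a" and K :: "'a set"
  assumes "similarity_IFS Lam phi"
    and "is_attractor Lam phi K"
  shows "((\<nexists>L. affine_hyperplane L \<and> K \<subseteq> L) \<longleftrightarrow> (\<exists>Sec. is_section Lam Sec \<and> diffuse_IFS phi Sec K))
       \<and> ((\<exists>Sec. is_section Lam Sec \<and> diffuse_IFS phi Sec K) \<longleftrightarrow> hyperplane_diffuse K)"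
proof -
  interpret ifs Lam phi K by unfold_locales (rule assms)+
  have i12: "\<not> (\<exists>L. affine_hyperplane L \<and> K \<subseteq> L) \<Longrightarrow> \<exists>Sec. is_section Lam Sec \<and> diffuse_IFS phi Sec K"
    by (rule one_two)
  have i23: "\<exists>Sec. is_section Lam Sec \<and> diffuse_IFS phi Sec K \<Longrightarrow> hyperplane_diffuse K"
    using two_three by blast
  have i31: "hyperplane_diffuse K \<Longrightarrow> \<not> (\<exists>L. affine_hyperplane L \<and> K \<subseteq> L)"
    by (rule three_one)
  show ?thesis using i12 i23 i31 by blast
qed

end
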